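(* Let $q$ be a set of operations on a set $\Omega$, write $\sim$ for $\sim_q$, and let $\pi\in\mathrm{Sim}(q)$. Then: (1) $\pi/\!\sim\;=\{([a],[b]): a\pi b\}$ is a permutation of $\Omega/\!\sim$; (2) if $R\subseteq\Omega^k$ is invariant under $\sim$ then $R\,\pi\,\pi(R)$; (3) for every ordinal $\alpha$, all $\bar a,\bar b\in\Omega^\alpha$ with $\bar a\,\pi\,\bar b$, and every formula $\phi(\bar x)$ of $\mathscr L^-_{\infty\infty}(q)$: $\Omega,q\models\phi(\bar a)\iff\Omega,q\models\phi(\bar b)$.
   Context: A similarity on $\Omega$ is a relation $\pi\subseteq\Omega\times\Omega$ such that every $a$ has some $b$ with $a\pi b$ and every $b$ has some $a$ with $a\pi b$; $\bar a\,\pi\,\bar b$ means coordinatewise relatedness; for $R,S\subseteq\Omega^k$, $R\,\pi\,S$ means that $\bar a\pi\bar b$ implies ($\bar a\in R\iff\bar b\in S$); $\pi(R)=\{\bar b:\exists\bar a\in R,\ \bar a\pi\bar b\}$. A set of operations is a set of finitary relations and quantifiers (subsets of $\mathcal P(\Omega^{k_1})\times\cdots\times\mathcal P(\Omega^{k_l})$) on $\Omega$; $\mathscr L^-_{\infty\infty}(q)$ is the equality-free infinitary logic with predicate symbols and Lindström quantifier symbols for members of $q$. $a\sim_q b$ iff for all formulas $\phi(x,\bar y)$ of $\mathscr L^-_{\infty\infty}(q)$ and tuples $\bar c$, $\phi(a,\bar c)\iff\phi(b,\bar c)$. $R$ is invariant under $\pi$ (resp. under $\sim$) if $\bar a\pi\bar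 b$ (resp. $\bar a\sim\bar b$) implies $\bar a\in R\iff\bar b\in R$. A quantifier $Q$ is $\sim$-invariant under $\pi$ if for all $\bar R,\bar S$ of its type, each component invariant under $\sim$, with $R_i\,\pi\,S_i$ for all $i$: $\bar R\in Q\iff\bar S\in Q$. $\mathrm{Sim}(q)$ is the set of similarities under which all relations of $q$ are invariant and all quantifiers of $q$ are $\sim_q$-invariant. *)

theory Defs
  imports Main
begin

text \<open>The universe \<Omega> is the type 'a. Tuples in \<Omega>^k are lists of length k.
  Operations: k-ary relations and Lindstroem quantifiers of type (k1,...,kl).\<close>

datatype 'a operation =
    Rel nat "'a list set"
  | Quant "nat list" "'a list set list set"

definition wf_operation :: "'a operation \<Rightarrow> bool" where
  "wf_operation o' = (case o' of
      Rel k R \<Rightarrow> R \<subseteq> {xs. length xs = k}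
    | Quant ks Q \<Rightarrow> Q \<subseteq> {Rs. length Rs = length ks \<and>
                              (\<forall>i<length ks. Rs ! i \<subseteq> {xs. length xs = ks ! i})})"

definition set_of_operations :: "'a operation set \<Rightarrow> bool" where
  "set_of_operations q = (\<forall>o'\<in>q. wf_operation o')"

text \<open>Equality-free infinitary formulas: variables of type 'v, conjunctions indexed by
  arbitrary subsets of the index type 'i, existential quantification over arbitrary sets
  of variables, and Lindstroem quantifier application binding a tuple of variables in
  each argument formula.\<close>

datatype ('a, 'v, 'i) form =
    Atom "'a list set" "'v list"
  | Neg "('a, 'v, 'i) form"
  | Conj "'i set" "'i \<Rightarrow> ('a, 'v, 'i) form"
  | Ex "'v set" "('a, 'v, 'i) form"
  | QApp "'a list set list set" "('v list \<times> ('a, 'v, 'i) form) list"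

definition upd :: "('v \<Rightarrow> 'a) \<Rightarrow> 'v list \<Rightarrow> 'a list \<Rightarrow> 'v \<Rightarrow> 'a" where
  "upd s xs as = fold (\<lambda>(x, a) f. f(x := a)) (zip xs as) s"

primrec sat :: "('a, 'v, 'i) form \<Rightarrow> ('v \<Rightarrow> 'a) \<Rightarrow> bool" where
  "sat (Atom R xs) s = (map s xs \<in> R)"
| "sat (Neg \<phi>) s = (\<not> sat \<phi> s)"
| "sat (Conj I F) s = (\<forall>i\<in>I. sat (F i) s)"
| "sat (Ex V \<phi>) s = (\<exists>t. (\<forall>v. v \<notin> V \<longrightarrow> t v = s v) \<and> sat \<phi> t)"
| "sat (QApp Q ps) s =
     (map (\<lambda>(xs, f). {as. length as = length xs \<and> f (upd s xs as)})
          (map (map_prod id sat) ps) \<in> Q)"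

text \<open>Formulas of L^-_{\<infinity>\<infinity>}(q): only symbols from q, with the right arities.\<close>

primrec wf_form :: "'a operation set \<Rightarrow> ('a, 'v, 'i) form \<Rightarrow> bool" where
  "wf_form q (Atom R xs) = (Rel (length xs) R \<in> q)"
| "wf_form q (Neg \<phi>) = wf_form q \<phi>"
| "wf_form q (Conj I F) = (\<forall>i\<in>I. wf_form q (F i))"
| "wf_form q (Ex V \<phi>) = wf_form q \<phi>"
| "wf_form q (QApp Q ps) =
     (Quant (map (\<lambda>(xs, b). length xs) (map (map_prod id (wf_form q)) ps)) Q \<in> q \<and>
      (\<forall>(xs, b)\<in>set (map (map_prod id (wf_form q)) ps). distinct xs \<and> b))"

definition simq :: "'v itself \<Rightarrow> 'i itself \<Rightarrow> 'a operation set \<Rightarrow> 'a \<Rightarrow> 'a \<Rightarrow> bool" where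
  "simq TV TI q a b =
     (\<forall>(\<phi> :: ('a, 'v, 'i) form) x s. wf_form q \<phi> \<longrightarrow> (sat \<phi> (s(x := a)) \<longleftrightarrow> sat \<phi> (s(x := b))))"

definition similarity :: "('a \<Rightarrow> 'a \<Rightarrow> bool) \<Rightarrow> bool" where
  "similarity \<pi> = ((\<forall>a. \<exists>b. \<pi> a b) \<and> (\<forall>b. \<exists>a. \<pi> a b))"

definition sim_rel :: "('a \<Rightarrow> 'a \<Rightarrow> bool) \<Rightarrow> 'a list set \<Rightarrow> 'a list set \<Rightarrow> bool" where
  "sim_rel \<pi> R S = (\<forall>as bs. list_all2 \<pi> as bs \<longrightarrow> (as \<in> R \<longleftrightarrow> bs \<in> S))"

definition sim_image :: "('a \<Rightarrow> 'a \<Rightarrow> bool) \<Rightarrow> 'a list set \<Rightarrow> 'a list set" where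
  "sim_image \<pi> R = {bs. \<exists>as\<in>R. list_all2 \<pi> as bs}"

definition invariant_under :: "('a \<Rightarrow> 'a \<Rightarrow> bool) \<Rightarrow> 'a list set \<Rightarrow> bool" where
  "invariant_under E R = (\<forall>as bs. list_all2 E as bs \<longrightarrow> (as \<in> R \<longleftrightarrow> bs \<in> R))"

definition quant_sim_invariant ::
  "('a \<Rightarrow> 'a \<Rightarrow> bool) \<Rightarrow> ('a \<Rightarrow> 'a \<Rightarrow> bool) \<Rightarrow> nat list \<Rightarrow> 'a list set list set \<Rightarrow> bool" where
  "quant_sim_invariant sim \<pi> ks Q =
     (\<forall>Rs Ss. length Rs = length ks \<longrightarrow> length Ss = length ks \<longrightarrow>
        (\<forall>i<length ks. Rs ! i \<subseteq> {xs. length xs = ks ! i} \<and> Ss ! i \<subseteq> {xs. length xs = ks ! i}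
            \<and> invariant_under sim (Rs ! i) \<and> invariant_under sim (Ss ! i)
            \<and> sim_rel \<pi> (Rs ! i) (Ss ! i)) \<longrightarrow>
        (Rs \<in> Q \<longleftrightarrow> Ss \<in> Q))"

definition Sim :: "'v itself \<Rightarrow> 'i itself \<Rightarrow> 'a operation set \<Rightarrow> ('a \<Rightarrow> 'a \<Rightarrow> bool) set" where
  "Sim TV TI q = {\<pi>. similarity \<pi> \<and>
      (\<forall>k R. Rel k R \<in> q \<longrightarrow> invariant_under \<pi> R) \<and>
      (\<forall>ks Q. Quant ks Q \<in> q \<longrightarrow> quant_sim_invariant (simq TV TI q) \<pi> ks Q)}"

end

theory Submission
  imports Defs
begin

lemma upd_Cons: "upd s (x#xs) (a#as) = upd (s(x:=a)) xs as"
  by (simp add: upd_def)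

lemma upd_Nil: "upd s [] as = s" "upd s xs [] = s"
  by (simp_all add: upd_def)

lemma upd_rel:
  assumes "list_all2 P as bs" "\<forall>v. P (s v) (t v)"
  shows "\<forall>v. P (upd s xs as v) (upd t xs bs v)"
  using assms
proof (induction xs arbitrary: as bs s t)
  case Nil then show ?case by (simp add: upd_Nil)
next
  case (Cons x xs)
  show ?case
  proof (cases as)
    case Nil
    with Cons.prems show ?thesis by (simp add: upd_Nil)
  next
    case (Cons a as')
    with Cons.prems obtain b bs' where bs: "bs = b # bs'" "P a b" "list_all2 P as' bs'"
      by (cases bs) auto
    have "\<forall>v. P ((s(x:=a)) v) ((t(x:=b)) v)" using Cons.prems bs by auto
    from Cons.IH[OF bs(3) this] show ?thesis unfolding \<open>as = a # as'\<close> bs(1) upd_Cons .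
  qed
qed

lemma upd_commute:
  "x \<notin> set xs \<Longrightarrow> upd (s(x:=a)) xs bs = (upd s xs bs)(x:=a)"
proof (induction xs arbitrary: s bs)
  case Nil then show ?case by (simp add: upd_Nil)
next
  case (Cons y ys)
  show ?case
  proof (cases bs)
    case Nil then show ?thesis by (simp add: upd_Nil)
  next
    case (Cons b bs')
    have "x \<noteq> y" using Cons.prems by auto
    then have "s(x:=a, y:=b) = s(y:=b, x:=a)" by (rule fun_upd_twist)
    have "upd (s(x:=a)) (y#ys) bs = upd (s(x:=a, y:=b)) ys bs'"
      unfolding \<open>bs = b # bs'\<close> upd_Cons ..
    also have "\<dots> = upd (s(y:=b, x:=a)) ys bs'" using \<open>s(x:=a, y:=b) = s(y:=b, x:=a)\<close> by simp
    also have "\<dots> = (upd (s(y:=b)) ys bs')(x:=a)" by (rule Cons.IH) (use Cons.prems in simp)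
    also have "\<dots> = (upd s (y#ys) bs)(x:=a)" unfolding \<open>bs = b # bs'\<close> upd_Cons ..
    finally show ?thesis .
  qed
qed

lemma upd_simq:
  fixes \<phi> :: "('a, 'v, 'i) form"
  assumes "list_all2 (simq TYPE('v) TYPE('i) q) as bs" "distinct xs" "wf_form q \<phi>"
  shows "sat \<phi> (upd s xs as) = sat \<phi> (upd s xs bs)"
  using assms
proof (induction xs arbitrary: as bs s)
  case Nil then show ?case by (simp add: upd_Nil)
next
  case (Cons x xs)
  show ?case
  proof (cases as)
    case Nil
    with Cons.prems show ?thesis by (simp add: upd_Nil)
  next
    case (Cons a as')
    with Cons.prems obtain b bs' where bs: "bs = b # bs'" "simq TYPE('v) TYPE('i) q a b"
         "list_all2 (simq TYPE('v) TYPE('i) q) as' bs'"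
      by (cases bs) auto
    have xn: "x \<notin> set xs" "distinct xs" using Cons.prems by auto
    have "sat \<phi> (upd (s(x:=a)) xs as') = sat \<phi> (upd (s(x:=a)) xs bs')"
      using Cons.IH[OF bs(3) xn(2) Cons.prems(3)] .
    also have "\<dots> = sat \<phi> ((upd s xs bs')(x:=a))" by (simp add: upd_commute[OF xn(1)])
    also have "\<dots> = sat \<phi> ((upd s xs bs')(x:=b))"
      using bs(2) Cons.prems(3) unfolding simq_def by blast
    also have "\<dots> = sat \<phi> (upd (s(x:=b)) xs bs')" by (simp add: upd_commute[OF xn(1)])
    finally show ?thesis unfolding \<open>as = a # as'\<close> bs(1) upd_Cons .
  qed
qed

lemma part3:
  fixes \<phi> :: "('a, 'v, 'i) form"
  assumes sim: "similarity \<pi>"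
    and rel: "\<forall>k R. Rel k R \<in> q \<longrightarrow> invariant_under \<pi> R"
    and quant: "\<forall>ks Q. Quant ks Q \<in> q \<longrightarrow> quant_sim_invariant (simq TYPE('v) TYPE('i) q) \<pi> ks Q"
  shows "wf_form q \<phi> \<Longrightarrow> (\<forall>v. \<pi> (s v) (t v)) \<Longrightarrow> sat \<phi> s = sat \<phi> t"
proof (induction \<phi> arbitrary: s t)
  case (Atom R xs)
  then have "invariant_under \<pi> R" using rel by auto
  moreover have "list_all2 \<pi> (map s xs) (map t xs)"
    using Atom.prems by (simp add: list_all2_conv_all_nth)
  ultimately show ?case unfolding invariant_under_def by simp
next
  case (Neg \<phi>) then show ?case by simp
next
  case (Conj I F) then show ?case by simp
next
  case (Ex V \<phi>)
  show ?case
  proof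
    assume "sat (form.Ex V \<phi>) s"
    then obtain s' where s': "\<forall>v. v \<notin> V \<longrightarrow> s' v = s v" "sat \<phi> s'" by auto
    define t' where "t' = (\<lambda>v. if v \<in> V then (SOME b. \<pi> (s' v) b) else t v)"
    have "\<forall>v. \<pi> (s' v) (t' v)"
      using sim s'(1) Ex.prems(2) unfolding similarity_def t'_def by (auto intro: someI_ex)
    then have "sat \<phi> t'" using Ex.IH Ex.prems s'(2) by auto
    moreover have "\<forall>v. v \<notin> V \<longrightarrow> t' v = t v" by (simp add: t'_def)
    ultimately show "sat (form.Ex V \<phi>) t" by auto
  next
    assume "sat (form.Ex V \<phi>) t"
    then obtain t' where t': "\<forall>v. v \<notin> V \<longrightarrow> t' v = t v" "sat \<phi> t'" by auto
    define s' where "s' = (\<lambda>v. if v \<in> V then (SOME a. \<pi> a (t' v)) else s v)"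
    have "\<forall>v. \<pi> (s' v) (t' v)"
      using sim t'(1) Ex.prems(2) unfolding similarity_def s'_def by (auto intro: someI_ex)
    then have "sat \<phi> s'" using Ex.IH Ex.prems t'(2) by auto
    moreover have "\<forall>v. v \<notin> V \<longrightarrow> s' v = s v" by (simp add: s'_def)
    ultimately show "sat (form.Ex V \<phi>) s" by auto
  qed
next
  case (QApp Q ps)
  define ks where "ks = map (\<lambda>(xs, b). length xs) (map (map_prod id (wf_form q)) ps)"
  have qin: "Quant ks Q \<in> q" using QApp.prems unfolding ks_def by simp
  have wfp: "\<And>xs \<phi>. (xs, \<phi>) \<in> set ps \<Longrightarrow> distinct xs \<and> wf_form q \<phi>"
    using QApp.prems by fastforce
  define Rs where "Rs = map (\<lambda>(xs, f). {as. length as = length xs \<and> f (upd s xs as)})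
          (map (map_prod id sat) ps)"
  define Ss where "Ss = map (\<lambda>(xs, f). {as. length as = length xs \<and> f (upd t xs as)})
          (map (map_prod id sat) ps)"
  have lens: "length Rs = length ks" "length Ss = length ks" "length ks = length ps"
    by (simp_all add: Rs_def Ss_def ks_def)
  have "\<forall>i<length ks. Rs ! i \<subseteq> {xs. length xs = ks ! i} \<and> Ss ! i \<subseteq> {xs. length xs = ks ! i}
            \<and> invariant_under (simq TYPE('v) TYPE('i) q) (Rs ! i)
            \<and> invariant_under (simq TYPE('v) TYPE('i) q) (Ss ! i)
            \<and> sim_rel \<pi> (Rs ! i) (Ss ! i)"
  proof (intro allI impI)
    fix i assume i: "i < length ks"
    obtain xs \<phi> where p: "ps ! i = (xs, \<phi>)" by fastforce
    have inset: "(xs, \<phi>) \<in> set ps" using p i lens nth_mem by metis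
    have Ri: "Rs ! i = {as. length as = length xs \<and> sat \<phi> (upd s xs as)}"
      using i lens p by (simp add: Rs_def)
    have Si: "Ss ! i = {as. length as = length xs \<and> sat \<phi> (upd t xs as)}"
      using i lens p by (simp add: Ss_def)
    have ki: "ks ! i = length xs" using i lens p by (simp add: ks_def)
    have dw: "distinct xs" "wf_form q \<phi>" using wfp[OF inset] by auto
    have IH: "\<And>s t. (\<forall>v. \<pi> (s v) (t v)) \<Longrightarrow> sat \<phi> s = sat \<phi> t"
      using QApp.IH[of "(xs, \<phi>)" "snd (xs,\<phi>)"] inset dw by fastforce
    have inv: "\<And>s. invariant_under (simq TYPE('v) TYPE('i) q)
               {as. length as = length xs \<and> sat \<phi> (upd s xs as)}"
      unfolding invariant_under_def
    proof (intro allI impI)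
      fix s as bs assume a: "list_all2 (simq TYPE('v) TYPE('i) q) as bs"
      then have "length as = length bs" by (rule list_all2_lengthD)
      then show "(as \<in> {as. length as = length xs \<and> sat \<phi> (upd s xs as)}) =
                 (bs \<in> {as. length as = length xs \<and> sat \<phi> (upd s xs as)})"
        using upd_simq[OF a dw] by auto
    qed
    have sr: "sim_rel \<pi> (Rs ! i) (Ss ! i)"
      unfolding sim_rel_def Ri Si
    proof (intro allI impI)
      fix as bs assume a: "list_all2 \<pi> as bs"
      then have "length as = length bs" by (rule list_all2_lengthD)
      moreover have "sat \<phi> (upd s xs as) = sat \<phi> (upd t xs bs)"
        using IH upd_rel[OF a QApp.prems(2)] by blast
      ultimately show "(as \<in> {as. length as = length xs \<and> sat \<phi> (upd s xs as)}) =
                 (bs \<in> {as. length as = length xs \<and> sat \<phi> (upd t xs as)})" by auto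
    qed
    show "Rs ! i \<subseteq> {xs. length xs = ks ! i} \<and> Ss ! i \<subseteq> {xs. length xs = ks ! i}
            \<and> invariant_under (simq TYPE('v) TYPE('i) q) (Rs ! i)
            \<and> invariant_under (simq TYPE('v) TYPE('i) q) (Ss ! i)
            \<and> sim_rel \<pi> (Rs ! i) (Ss ! i)"
      using Ri Si ki inv sr by auto
  qed
  then have "(Rs \<in> Q) = (Ss \<in> Q)"
    using quant qin lens unfolding quant_sim_invariant_def by blast
  then show ?case by (simp add: Rs_def Ss_def)
qed

theorem lemma13:
  fixes q :: "'a operation set" and \<pi> :: "'a \<Rightarrow> 'a \<Rightarrow> bool"
  assumes "set_of_operations q"
    and "\<pi> \<in> Sim TYPE('v) TYPE('i) q"
  defines "E \<equiv> {(a, b). simq TYPE('v) TYPE('i) q a b}"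
  shows "(\<exists>f. bij_betw f (UNIV // E) (UNIV // E) \<and>
            {(E `` {a}, E `` {b}) | a b. \<pi> a b} = {(X, f X) | X. X \<in> UNIV // E})
       \<and> (\<forall>k R. R \<subseteq> {xs. length xs = k} \<longrightarrow> invariant_under (simq TYPE('v) TYPE('i) q) R
            \<longrightarrow> sim_rel \<pi> R (sim_image \<pi> R))
       \<and> (\<forall>(\<phi> :: ('a, 'v, 'i) form) s t. wf_form q \<phi> \<longrightarrow> (\<forall>v. \<pi> (s v) (t v))
            \<longrightarrow> (sat \<phi> s \<longleftrightarrow> sat \<phi> t))"
proof -
  let ?sq = "simq TYPE('v) TYPE('i) q"
  have sim: "similarity \<pi>"
    and rel: "\<forall>k R. Rel k R \<in> q \<longrightarrow> invariant_under \<pi> R"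
    and quant: "\<forall>ks Q. Quant ks Q \<in> q \<longrightarrow> quant_sim_invariant ?sq \<pi> ks Q"
    using assms(2) unfolding Sim_def by auto
  have P3: "\<forall>(\<phi> :: ('a, 'v, 'i) form) s t. wf_form q \<phi> \<longrightarrow> (\<forall>v. \<pi> (s v) (t v))
            \<longrightarrow> (sat \<phi> s \<longleftrightarrow> sat \<phi> t)"
    using part3[OF sim rel quant] by blast
  have fw: "\<forall>a. \<exists>b. \<pi> a b" and bw: "\<forall>b. \<exists>a. \<pi> a b" using sim unfolding similarity_def by auto
  have key1: "?sq b b'" if "\<pi> a b" "\<pi> a' b'" "?sq a a'" for a b a' b'
    unfolding simq_def
  proof (intro allI impI)
    fix \<phi> :: "('a,'v,'i) form" and x :: 'v and s :: "'v \<Rightarrow> 'a" assume wf: "wf_form q \<phi>"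
    define s' where "s' = (\<lambda>v. SOME a. \<pi> a (s v))"
    have s': "\<forall>v. \<pi> (s' v) (s v)" unfolding s'_def using bw by (auto intro: someI_ex)
    have "\<forall>v. \<pi> ((s'(x:=a)) v) ((s(x:=b)) v)" using s' that(1) by simp
    then have "sat \<phi> (s'(x:=a)) = sat \<phi> (s(x:=b))" using P3 wf by blast
    then have "sat \<phi> (s(x:=b)) = sat \<phi> (s'(x:=a))" by simp
    also have "\<dots> = sat \<phi> (s'(x:=a'))" using that(3) wf unfolding simq_def by blast
    also have "\<dots> = sat \<phi> (s(x:=b'))"
    proof -
      have "\<forall>v. \<pi> ((s'(x:=a')) v) ((s(x:=b')) v)" using s' that(2) by simp
      then show ?thesis using P3 wf by blast
    qed
    finally show "sat \<phi> (s(x:=b)) = sat \<phi> (s(x:=b'))" .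
  qed
  have key2: "?sq a a'" if "\<pi> a b" "\<pi> a' b'" "?sq b b'" for a b a' b'
    unfolding simq_def
  proof (intro allI impI)
    fix \<phi> :: "('a,'v,'i) form" and x :: 'v and s :: "'v \<Rightarrow> 'a" assume wf: "wf_form q \<phi>"
    define s' where "s' = (\<lambda>v. SOME b. \<pi> (s v) b)"
    have s': "\<forall>v. \<pi> (s v) (s' v)" unfolding s'_def using fw by (auto intro: someI_ex)
    have "\<forall>v. \<pi> ((s(x:=a)) v) ((s'(x:=b)) v)" using s' that(1) by simp
    then have "sat \<phi> (s(x:=a)) = sat \<phi> (s'(x:=b))" using P3 wf by blast
    also have "\<dots> = sat \<phi> (s'(x:=b'))" using that(3) wf unfolding simq_def by blast
    also have "\<dots> = sat \<phi> (s(x:=a'))"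
    proof -
      have "\<forall>v. \<pi> ((s(x:=a')) v) ((s'(x:=b')) v)" using s' that(2) by simp
      then have "sat \<phi> (s(x:=a')) = sat \<phi> (s'(x:=b'))" using P3 wf by blast
      then show ?thesis by simp
    qed
    finally show "sat \<phi> (s(x:=a)) = sat \<phi> (s(x:=a'))" .
  qed
  have refl: "?sq a a" for a unfolding simq_def by blast
  have symm: "?sq a b \<Longrightarrow> ?sq b a" for a b unfolding simq_def by blast
  have trans: "?sq a b \<Longrightarrow> ?sq b c \<Longrightarrow> ?sq a c" for a b c unfolding simq_def by blast
  have cls: "E `` {a} = {b. ?sq a b}" for a unfolding E_def by auto
  have cls_eq: "E `` {a} = E `` {b} \<longleftrightarrow> ?sq a b" for a b
  proof
    assume "E `` {a} = E `` {b}"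
    then have "b \<in> E `` {a}" using refl cls by auto
    then show "?sq a b" using cls by auto
  next
    assume "?sq a b" then show "E `` {a} = E `` {b}" unfolding cls
      using symm trans by blast
  qed
  define f where "f X = {b. \<exists>a\<in>X. \<pi> a b}" for X
  have fcl: "f (E `` {a}) = E `` {b}" if "\<pi> a b" for a b
  proof
    show "f (E `` {a}) \<subseteq> E `` {b}"
      unfolding f_def cls using key1 that by blast
  next
    show "E `` {b} \<subseteq> f (E `` {a})"
    proof
      fix b' assume "b' \<in> E `` {b}"
      then have sb: "?sq b b'" using cls by auto
      obtain a' where a': "\<pi> a' b'" using bw by auto
      have "?sq a a'" using key2[OF that a' sb] .
      then show "b' \<in> f (E `` {a})" unfolding f_def cls using a' by blast
    qed
  qed
  have P1a: "bij_betw f (UNIV // E) (UNIV // E)"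
    unfolding bij_betw_def
  proof
    show "inj_on f (UNIV // E)"
    proof (rule inj_onI)
      fix X Y assume X: "X \<in> UNIV // E" and Y: "Y \<in> UNIV // E" and e: "f X = f Y"
      obtain a where a: "X = E `` {a}" using X by (auto elim: quotientE)
      obtain a' where a': "Y = E `` {a'}" using Y by (auto elim: quotientE)
      obtain b where b: "\<pi> a b" using fw by auto
      obtain b' where b': "\<pi> a' b'" using fw by auto
      have "E `` {b} = E `` {b'}" using e a a' fcl b b' by simp
      then have "?sq b b'" using cls_eq by blast
      then have "?sq a a'" using key2 b b' by blast
      then show "X = Y" using a a' cls_eq by blast
    qed
  next
    show "f ` (UNIV // E) = UNIV // E"
    proof
      show "f ` (UNIV // E) \<subseteq> UNIV // E"
      proof
        fix Y assume "Y \<in> f ` (UNIV // E)"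
        then obtain a where "Y = f (E `` {a})" by (auto elim: quotientE)
        moreover obtain b where "\<pi> a b" using fw by auto
        ultimately show "Y \<in> UNIV // E" using fcl by (auto intro: quotientI)
      qed
    next
      show "UNIV // E \<subseteq> f ` (UNIV // E)"
      proof
        fix Y assume "Y \<in> UNIV // E"
        then obtain b where Y: "Y = E `` {b}" by (auto elim: quotientE)
        obtain a where "\<pi> a b" using bw by auto
        then have "Y = f (E `` {a})" using fcl Y by simp
        then show "Y \<in> f ` (UNIV // E)" by (auto intro: quotientI)
      qed
    qed
  qed
  have P1b: "{(E `` {a}, E `` {b}) | a b. \<pi> a b} = {(X, f X) | X. X \<in> UNIV // E}"
  proof
    show "{(E `` {a}, E `` {b}) | a b. \<pi> a b} \<subseteq> {(X, f X) | X. X \<in> UNIV // E}"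
      using fcl by (auto intro: quotientI)
  next
    show "{(X, f X) | X. X \<in> UNIV // E} \<subseteq> {(E `` {a}, E `` {b}) | a b. \<pi> a b}"
    proof
      fix p assume "p \<in> {(X, f X) | X. X \<in> UNIV // E}"
      then obtain a where p: "p = (E `` {a}, f (E `` {a}))" by (auto elim: quotientE)
      obtain b where b: "\<pi> a b" using fw by auto
      show "p \<in> {(E `` {a}, E `` {b}) | a b. \<pi> a b}" using p b fcl[OF b] by blast
    qed
  qed
  have P2: "\<forall>k R. R \<subseteq> {xs. length xs = k} \<longrightarrow> invariant_under ?sq R
            \<longrightarrow> sim_rel \<pi> R (sim_image \<pi> R)"
  proof (intro allI impI)
    fix k R assume inv: "invariant_under ?sq R"
    show "sim_rel \<pi> R (sim_image \<pi> R)" unfolding sim_rel_def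
    proof (intro allI impI iffI)
      fix as bs assume "list_all2 \<pi> as bs" "as \<in> R"
      then show "bs \<in> sim_image \<pi> R" unfolding sim_image_def by blast
    next
      fix as bs assume ab: "list_all2 \<pi> as bs" and "bs \<in> sim_image \<pi> R"
      then obtain as' where as': "as' \<in> R" "list_all2 \<pi> as' bs" unfolding sim_image_def by blast
      have "list_all2 ?sq as' as"
      proof -
        have "list_all2 (\<lambda>a b. \<pi> a b) as' bs" using as'(2) by simp
        moreover have "list_all2 (\<lambda>b a. \<pi> a b) bs as" using ab by (simp add: list_all2_conv_all_nth)
        ultimately have "list_all2 (\<lambda>a' a. \<exists>b. \<pi> a' b \<and> \<pi> a b) as' as"
          by (auto simp: list_all2_conv_all_nth) blast
        then show ?thesis
          by (rule list_all2_mono) (use key2 refl in blast)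
      qed
      then show "as \<in> R" using inv as'(1) unfolding invariant_under_def by blast
    qed
  qed
  show ?thesis using P1a P1b P2 P3 by blast
qed

end
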